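(* Let $(G,\mathcal{P})$, $(H,\mathcal{Q})$ be group pairs with finite generating sets $S$ of $G$ and $T$ of $H$, and let $f=(f_1,f_2)\colon(G,\mathcal{P})\to(H,\mathcal{Q})$ be an $(L,C,M)$-Lipschitz map of pairs. (i) For all $\alpha,\alpha'\in\mathbb{N}$ with $\alpha'\ge L\alpha+C+M$, there is a simplicial map $f_*\colon\hat R_\alpha(G,\mathcal{P},S)\to\hat R_{\alpha'}(H,\mathcal{Q},T)$ given on vertices by $f_1\sqcup f_2$. (ii) Let $r\colon(H,\mathcal{Q})\to(G,\mathcal{P})$ be an $(L,C,M)$-Lipschitz map of pairs such that $(f,r)$ is an $(L,C,M)$-quasi-retraction of pairs. For all $\alpha,\alpha',\beta,\beta'\in\mathbb{N}$ with $\alpha'\ge L\alpha+C+M$, $\beta'\ge\alpha'$, $\beta\ge L\beta'+2C+M$, the composite $\hat R_\alpha(G,\mathcal{P},S)\xrightarrow{f_*}\hat R_{\alpha'}(H,\mathcal{Q},T)\hookrightarrow\hat R_{\beta'}(H,\mathcal{Q},T)\xrightarrow{r_*}\hat R_\beta(G,\mathcal{P},S)$ is simplicially homotopic to the inclusion $\hat R_\alpha(G,\mathcal{P},S)\hookrightarrow\hat R_\beta(G,\mathcal{P},S)$. In particular, for every $i\in\mathbb{N}$, if $(H_i(\hat R_{\alpha'}(H,\mathcal{Q},T);\mathbb{Z}))_{\alpha'\in\mathbb{N}}$ is essentially trivial, then $(H_i(\hat R_\alpha(G,\mathcal{P},S);\mathbb{Z}))_{\alpha\in\mathbb{N}}$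 is essentially trivial.
   Context: A group pair $(G,\mathcal{P})$: $G$ finitely generated, $\mathcal{P}$ a non-empty finite collection of subgroups (repetitions allowed); $G/\mathcal{P}=\coprod_{P\in\mathcal{P}}G/P$, elements viewed as cosets (subsets of $G$). $d_S$ is the word metric. $f$ is $(L,C)$-Lipschitz if $d(f(x),f(x'))\le L\,d(x,x')+C$. For $L\ge1,C\ge0,M\ge0$, an $(L,C,M)$-Lipschitz map of pairs $f=(f_1,f_2)$ is an $(L,C)$-Lipschitz $f_1\colon G\to H$ and a function $f_2\colon G/\mathcal{P}\to H/\mathcal{Q}$ with Hausdorff distance between $f_1(A)$ and $f_2(A)$ less than $M$ for all $A$. $(f,r)$ is an $(L,C,M)$-quasi-retraction of pairs if moreover $d_G(r_1f_1(g),g)\le C$ for all $g\in G$ and $r_2\circ f_2=\mathrm{id}_{G/\mathcal{P}}$ (with $r_*$ the simplicial map of part (i) for $r$). Elements of $G/\mathcal{P}$ are cone vertices. A finite $U\subseteq G\sqcup G/\mathcal{P}$ is a unicone subset of diameter $\le\alpha$ if $U\cap G$ has $d_S$-diameter $\le\alpha$ and $U$ contains at most one cone vertex $A$, in which case every $g\in U\cap G$ has $a\in A$ with $d_S(g,a)\le\alpha$. $\hat R_\alpha(G,\mathcal{P},S)$ is the simplicial complex whose simplices are these subsets; for $\beta\ge\alpha$ it is a subcomplex of $\hat R_\beta$. A directed system of groups is essentially trivial if each $H_\alpha$ maps trivially to some $H_\beta$, $\beta\ge\alpha$. *)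

theory Defs
  imports "HOL-Algebra.Generated_Groups" "HOL-Algebra.Coset" "HOL-Library.Extended_Real"
begin

text \<open>A finite collection of subgroups with repetitions is a non-empty list Ps.
  A finite generating set S of G.\<close>

definition fin_gen_set :: "('g, 'b) monoid_scheme \<Rightarrow> 'g set \<Rightarrow> bool" where
  "fin_gen_set G S \<longleftrightarrow> finite S \<and> S \<subseteq> carrier G \<and> generate G S = carrier G"

definition group_pair :: "('g, 'b) monoid_scheme \<Rightarrow> 'g set list \<Rightarrow> bool" where
  "group_pair G Ps \<longleftrightarrow> group G \<and> Ps \<noteq> [] \<and> (\<forall>P\<in>set Ps. subgroup P G)"

definition word_length :: "('g, 'b) monoid_scheme \<Rightarrow> 'g set \<Rightarrow> 'g \<Rightarrow> nat" where
  "word_length G S x = (LEAST n. \<exists>ws. length ws = n \<and> set ws \<subseteq> S \<union> (\<lambda>s. inv\<^bsub>G\<^esub> s) ` S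
      \<and> foldr (\<lambda>a b. a \<otimes>\<^bsub>G\<^esub> b) ws \<one>\<^bsub>G\<^esub> = x)"

definition wdist :: "('g, 'b) monoid_scheme \<Rightarrow> 'g set \<Rightarrow> 'g \<Rightarrow> 'g \<Rightarrow> nat" where
  "wdist G S g h = word_length G S (inv\<^bsub>G\<^esub> g \<otimes>\<^bsub>G\<^esub> h)"

text \<open>G/P = disjoint union of the left coset spaces G/P for P in the collection;
  an element is a pair (index, coset).\<close>
definition cones :: "('g, 'b) monoid_scheme \<Rightarrow> 'g set list \<Rightarrow> (nat \<times> 'g set) set" where
  "cones G Ps = {(k, g <#\<^bsub>G\<^esub> (Ps ! k)) | k g. k < length Ps \<and> g \<in> carrier G}"

definition hausdorff_dist :: "('g, 'b) monoid_scheme \<Rightarrow> 'g set \<Rightarrow> 'g set \<Rightarrow> 'g set \<Rightarrow> ereal" where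
  "hausdorff_dist G S X Y =
     max (SUP x\<in>X. INF y\<in>Y. ereal (real (wdist G S x y)))
         (SUP y\<in>Y. INF x\<in>X. ereal (real (wdist G S x y)))"

definition lipschitz_map :: "('g, 'b) monoid_scheme \<Rightarrow> 'g set \<Rightarrow> ('h, 'c) monoid_scheme \<Rightarrow> 'h set
    \<Rightarrow> real \<Rightarrow> real \<Rightarrow> ('g \<Rightarrow> 'h) \<Rightarrow> bool" where
  "lipschitz_map G S H T L C f \<longleftrightarrow> f \<in> carrier G \<rightarrow> carrier H \<and>
     (\<forall>x\<in>carrier G. \<forall>x'\<in>carrier G.
        real (wdist H T (f x) (f x')) \<le> L * real (wdist G S x x') + C)"

definition lipschitz_map_of_pairs ::
  "('g, 'b) monoid_scheme \<Rightarrow> 'g set list \<Rightarrow> 'g set \<Rightarrow> ('h, 'c) monoid_scheme \<Rightarrow> 'h set list \<Rightarrow> 'h set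
    \<Rightarrow> real \<Rightarrow> real \<Rightarrow> real \<Rightarrow> ('g \<Rightarrow> 'h) \<Rightarrow> (nat \<times> 'g set \<Rightarrow> nat \<times> 'h set) \<Rightarrow> bool" where
  "lipschitz_map_of_pairs G Ps S H Qs T L C M f1 f2 \<longleftrightarrow>
     L \<ge> 1 \<and> C \<ge> 0 \<and> M \<ge> 0 \<and>
     lipschitz_map G S H T L C f1 \<and>
     f2 \<in> cones G Ps \<rightarrow> cones H Qs \<and>
     (\<forall>A\<in>cones G Ps. hausdorff_dist H T (f1 ` snd A) (snd (f2 A)) < ereal M)"

definition quasi_retraction_of_pairs ::
  "('g, 'b) monoid_scheme \<Rightarrow> 'g set list \<Rightarrow> 'g set \<Rightarrow> ('h, 'c) monoid_scheme \<Rightarrow> 'h set list \<Rightarrow> 'h set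
    \<Rightarrow> real \<Rightarrow> real \<Rightarrow> real \<Rightarrow> ('g \<Rightarrow> 'h) \<Rightarrow> (nat \<times> 'g set \<Rightarrow> nat \<times> 'h set)
    \<Rightarrow> ('h \<Rightarrow> 'g) \<Rightarrow> (nat \<times> 'h set \<Rightarrow> nat \<times> 'g set) \<Rightarrow> bool" where
  "quasi_retraction_of_pairs G Ps S H Qs T L C M f1 f2 r1 r2 \<longleftrightarrow>
     lipschitz_map_of_pairs G Ps S H Qs T L C M f1 f2 \<and>
     lipschitz_map_of_pairs H Qs T G Ps S L C M r1 r2 \<and>
     (\<forall>g\<in>carrier G. real (wdist G S (r1 (f1 g)) g) \<le> C) \<and>
     (\<forall>A\<in>cones G Ps. r2 (f2 A) = A)"

text \<open>Vertices: Inl g for g in G, Inr A for cone vertices A in G/P.\<close>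
definition vertices :: "('g, 'b) monoid_scheme \<Rightarrow> 'g set list \<Rightarrow> ('g + (nat \<times> 'g set)) set" where
  "vertices G Ps = Inl ` carrier G \<union> Inr ` cones G Ps"

definition unicone :: "('g, 'b) monoid_scheme \<Rightarrow> 'g set list \<Rightarrow> 'g set \<Rightarrow> nat
    \<Rightarrow> ('g + (nat \<times> 'g set)) set \<Rightarrow> bool" where
  "unicone G Ps S \<alpha> U \<longleftrightarrow> finite U \<and> U \<noteq> {} \<and> U \<subseteq> vertices G Ps \<and>
     (\<forall>g h. Inl g \<in> U \<longrightarrow> Inl h \<in> U \<longrightarrow> wdist G S g h \<le> \<alpha>) \<and>
     (\<forall>A B. Inr A \<in> U \<longrightarrow> Inr B \<in> U \<longrightarrow> A = B) \<and>
     (\<forall>A g. Inr A \<in> U \<longrightarrow> Inl g \<in> U \<longrightarrow> (\<exists>a\<in>snd A. wdist G S g a \<le> \<alpha>))"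

definition Rhat :: "('g, 'b) monoid_scheme \<Rightarrow> 'g set list \<Rightarrow> 'g set \<Rightarrow> nat
    \<Rightarrow> ('g + (nat \<times> 'g set)) set set" where
  "Rhat G Ps S \<alpha> = {U. unicone G Ps S \<alpha> U}"

definition vmap :: "('g \<Rightarrow> 'h) \<Rightarrow> ('a \<Rightarrow> 'b) \<Rightarrow> ('g + 'a) \<Rightarrow> ('h + 'b)" where
  "vmap f1 f2 = case_sum (\<lambda>g. Inl (f1 g)) (\<lambda>A. Inr (f2 A))"

definition simplicial_map :: "'v set set \<Rightarrow> 'w set set \<Rightarrow> ('v \<Rightarrow> 'w) \<Rightarrow> bool" where
  "simplicial_map K K' F \<longleftrightarrow> (\<forall>\<sigma>\<in>K. F ` \<sigma> \<in> K')"

definition contiguous :: "'v set set \<Rightarrow> 'w set set \<Rightarrow> ('v \<Rightarrow> 'w) \<Rightarrow> ('v \<Rightarrow> 'w) \<Rightarrow> bool" where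
  "contiguous K K' F F' \<longleftrightarrow> (\<forall>\<sigma>\<in>K. F ` \<sigma> \<union> F' ` \<sigma> \<in> K')"

definition simp_homotopic :: "'v set set \<Rightarrow> 'w set set \<Rightarrow> ('v \<Rightarrow> 'w) \<Rightarrow> ('v \<Rightarrow> 'w) \<Rightarrow> bool" where
  "simp_homotopic K K' F F' \<longleftrightarrow> simplicial_map K K' F \<and> simplicial_map K K' F' \<and>
     (\<lambda>a b. simplicial_map K K' a \<and> simplicial_map K K' b \<and> contiguous K K' a b)\<^sup>*\<^sup>* F F'"

text \<open>An i-chain of K: finitely supported integer function on ordered (i+1)-tuples
  of vertices spanning a simplex of K.\<close>
definition is_chain :: "'v set set \<Rightarrow> nat \<Rightarrow> ('v list \<Rightarrow> int) \<Rightarrow> bool" where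
  "is_chain K i c \<longleftrightarrow> finite {\<sigma>. c \<sigma> \<noteq> 0} \<and>
     (\<forall>\<sigma>. c \<sigma> \<noteq> 0 \<longrightarrow> length \<sigma> = Suc i \<and> set \<sigma> \<in> K)"

definition face :: "nat \<Rightarrow> 'v list \<Rightarrow> 'v list" where
  "face j \<sigma> = take j \<sigma> @ drop (Suc j) \<sigma>"

definition bdry :: "('v list \<Rightarrow> int) \<Rightarrow> 'v list \<Rightarrow> int" where
  "bdry c \<tau> = (\<Sum>\<sigma>\<in>{\<sigma>. c \<sigma> \<noteq> 0}. \<Sum>j<length \<sigma>.
       if face j \<sigma> = \<tau> then (-1) ^ j * c \<sigma> else 0)"

definition is_cycle :: "'v set set \<Rightarrow> nat \<Rightarrow> ('v list \<Rightarrow> int) \<Rightarrow> bool" where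
  "is_cycle K i c \<longleftrightarrow> is_chain K i c \<and> (i = 0 \<or> bdry c = (\<lambda>_. 0))"

definition is_boundary :: "'v set set \<Rightarrow> nat \<Rightarrow> ('v list \<Rightarrow> int) \<Rightarrow> bool" where
  "is_boundary K i c \<longleftrightarrow> (\<exists>d. is_chain K (Suc i) d \<and> bdry d = c)"

text \<open>For a filtration K_0 \<subseteq> K_1 \<subseteq> ... the directed system (H_i(K_\<alpha>;Z))_\<alpha>, with
  maps induced by inclusion, is essentially trivial iff for each \<alpha> there is \<beta> \<ge> \<alpha>
  such that H_i(K_\<alpha>) \<rightarrow> H_i(K_\<beta>) is zero, i.e. every i-cycle of K_\<alpha> is an i-boundary in K_\<beta>.\<close>
definition ess_trivial_homology :: "(nat \<Rightarrow> 'v set set) \<Rightarrow> nat \<Rightarrow> bool" where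
  "ess_trivial_homology K i \<longleftrightarrow>
     (\<forall>\<alpha>. \<exists>\<beta>\<ge>\<alpha>. \<forall>c. is_cycle (K \<alpha>) i c \<longrightarrow> is_boundary (K \<beta>) i c)"

end

theory Submission
  imports Defs "HOL-Library.Poly_Mapping"
begin


context group
begin

definition wprod :: "'a list \<Rightarrow> 'a" where
  "wprod ws = foldr (\<lambda>a b. a \<otimes> b) ws \<one>"

definition isw :: "'a set \<Rightarrow> 'a list \<Rightarrow> 'a \<Rightarrow> bool" where
  "isw S ws x \<longleftrightarrow> set ws \<subseteq> S \<union> (\<lambda>s. inv s) ` S \<and> wprod ws = x"

lemma wprod_Nil [simp]: "wprod [] = \<one>" by (simp add: wprod_def)
lemma wprod_Cons [simp]: "wprod (a # ws) = a \<otimes> wprod ws" by (simp add: wprod_def)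

lemma wprod_closed: "set ws \<subseteq> carrier G \<Longrightarrow> wprod ws \<in> carrier G"
  by (induction ws) auto

lemma wprod_append: "set ws \<subseteq> carrier G \<Longrightarrow> set vs \<subseteq> carrier G \<Longrightarrow>
   wprod (ws @ vs) = wprod ws \<otimes> wprod vs"
  by (induction ws) (auto simp: m_assoc wprod_closed)

lemma wprod_rev_inv: "set ws \<subseteq> carrier G \<Longrightarrow> wprod (rev (map (\<lambda>s. inv s) ws)) = inv (wprod ws)"
proof (induction ws)
  case (Cons a ws)
  have "rev (map (\<lambda>s. inv s) (a # ws)) = rev (map (\<lambda>s. inv s) ws) @ [inv a]" by simp
  then have "wprod (rev (map (\<lambda>s. inv s) (a # ws))) = wprod (rev (map (\<lambda>s. inv s) ws)) \<otimes> (inv a \<otimes> \<one>)"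
    using Cons.prems by (simp only:) (subst wprod_append, auto)
  also have "\<dots> = inv (wprod ws) \<otimes> inv a" using Cons by simp
  also have "\<dots> = inv (a \<otimes> wprod ws)" using Cons by (simp add: inv_mult_group wprod_closed)
  finally show ?case by simp
qed simp

lemma word_length_isw: "word_length G S x = (LEAST n. \<exists>ws. length ws = n \<and> isw S ws x)"
  unfolding word_length_def isw_def wprod_def by simp

lemma isw_exists: assumes "S \<subseteq> carrier G" "x \<in> generate G S" shows "\<exists>ws. isw S ws x"
  using assms(2)
proof (induction rule: generate.induct)
  case one then show ?case by (rule exI[of _ "[]"]) (simp add: isw_def)
next
  case (incl h) then show ?case by (intro exI[of _ "[h]"]) (use assms in \<open>auto simp: isw_def\<close>)
next
  case (inv h) then show ?case by (intro exI[of _ "[inv h]"]) (use assms in \<open>auto simp: isw_def\<close>)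
next
  case (eng h1 h2)
  then obtain w1 w2 where "isw S w1 h1" "isw S w2 h2" by blast
  moreover have "S \<union> (\<lambda>s. inv s) ` S \<subseteq> carrier G" using assms by auto
  ultimately show ?case
    by (intro exI[of _ "w1 @ w2"]) (auto simp: isw_def intro!: wprod_append)
qed

lemma wl_le: "isw S ws x \<Longrightarrow> word_length G S x \<le> length ws"
  unfolding word_length_isw by (rule Least_le) blast

lemma wl_word: assumes "S \<subseteq> carrier G" "x \<in> generate G S"
  shows "\<exists>ws. isw S ws x \<and> length ws = word_length G S x"
proof -
  obtain ws where "isw S ws x" using isw_exists assms by blast
  then have "\<exists>n. \<exists>ws. length ws = n \<and> isw S ws x" by blast
  from LeastI_ex[OF this] have "\<exists>ws'. length ws' = word_length G S x \<and> isw S ws' x"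
    unfolding word_length_isw .
  then show ?thesis by blast
qed

lemma wl_mult: assumes "fin_gen_set G S" "x \<in> carrier G" "y \<in> carrier G"
  shows "word_length G S (x \<otimes> y) \<le> word_length G S x + word_length G S y"
proof -
  have S: "S \<subseteq> carrier G" "generate G S = carrier G" using assms(1) by (auto simp: fin_gen_set_def)
  obtain w1 where w1: "isw S w1 x" "length w1 = word_length G S x" using wl_word S assms by metis
  obtain w2 where w2: "isw S w2 y" "length w2 = word_length G S y" using wl_word S assms by metis
  have sub: "S \<union> (\<lambda>s. inv s) ` S \<subseteq> carrier G" using S by auto
  have "set w1 \<subseteq> carrier G" "set w2 \<subseteq> carrier G" using w1 w2 sub unfolding isw_def by (meson order_trans)+
  then have "isw S (w1 @ w2) (x \<otimes> y)" using w1 w2 by (auto simp: isw_def wprod_append)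
  then show ?thesis using wl_le w1 w2 by fastforce
qed

lemma wl_inv: assumes "fin_gen_set G S" "x \<in> carrier G"
  shows "word_length G S (inv x) \<le> word_length G S x"
proof -
  have S: "S \<subseteq> carrier G" "generate G S = carrier G" using assms(1) by (auto simp: fin_gen_set_def)
  obtain w1 where w1: "isw S w1 x" "length w1 = word_length G S x" using wl_word S assms by metis
  have sub: "S \<union> (\<lambda>s. inv s) ` S \<subseteq> carrier G" using S by auto
  have "set (rev (map (\<lambda>s. inv s) w1)) \<subseteq> S \<union> (\<lambda>s. inv s) ` S"
    using w1(1) S(1) unfolding isw_def by (auto simp: subset_iff)
  moreover have "set w1 \<subseteq> carrier G" using w1 sub by (auto simp: isw_def)
  ultimately have "isw S (rev (map (\<lambda>s. inv s) w1)) (inv x)" using w1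
    by (auto simp: isw_def wprod_rev_inv)
  then show ?thesis using wl_le w1 by fastforce
qed

lemma wdist_triangle: assumes "fin_gen_set G S" "x \<in> carrier G" "y \<in> carrier G" "z \<in> carrier G"
  shows "wdist G S x z \<le> wdist G S x y + wdist G S y z"
proof -
  have "inv x \<otimes> z = (inv x \<otimes> y) \<otimes> (inv y \<otimes> z)" using assms
    by (simp add: m_assoc[symmetric]) (simp add: m_assoc)
  then show ?thesis unfolding wdist_def using wl_mult[OF assms(1)] assms by simp
qed

lemma wdist_sym: assumes "fin_gen_set G S" "x \<in> carrier G" "y \<in> carrier G"
  shows "wdist G S x y = wdist G S y x"
proof -
  have *: "wdist G S a b \<le> wdist G S b a" if "a \<in> carrier G" "b \<in> carrier G" for a b
  proof -
    have "inv (inv b \<otimes> a) = inv a \<otimes> b" using that by (simp add: inv_mult_group)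
    then show ?thesis unfolding wdist_def using wl_inv[OF assms(1), of "inv b \<otimes> a"] that by simp
  qed
  show ?thesis using *[of x y] *[of y x] assms by simp
qed

end



lemma cone_carrier: assumes "group_pair G Ps" "A \<in> cones G Ps" shows "snd A \<subseteq> carrier G"
proof -
  obtain k g where A: "A = (k, g <#\<^bsub>G\<^esub> (Ps ! k))" "k < length Ps" "g \<in> carrier G"
    using assms(2) unfolding cones_def by blast
  have grp: "group G" and sg: "subgroup (Ps ! k) G" using assms(1) A(2) unfolding group_pair_def by auto
  show ?thesis using A group.l_coset_subset_G[OF grp subgroup.subset[OF sg] A(3)] by simp
qed

lemma haus_pick: assumes "hausdorff_dist G S X Y < ereal M" "x \<in> X"
  shows "\<exists>y\<in>Y. real (wdist G S x y) < M"
proof -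
  have "(INF y\<in>Y. ereal (real (wdist G S x y))) \<le> (SUP x\<in>X. INF y\<in>Y. ereal (real (wdist G S x y)))"
    using assms(2) by (rule SUP_upper)
  also have "\<dots> < ereal M" using assms(1) unfolding hausdorff_dist_def by simp
  finally show ?thesis by (simp add: INF_less_iff)
qed

lemma vmap_simps [simp]: "vmap f1 f2 (Inl g) = Inl (f1 g)" "vmap f1 f2 (Inr A) = Inr (f2 A)"
  by (simp_all add: vmap_def)

lemma vmap_Inl_img: "Inl y \<in> vmap f1 f2 ` U \<longleftrightarrow> (\<exists>g. Inl g \<in> U \<and> y = f1 g)"
proof
  assume "Inl y \<in> vmap f1 f2 ` U" then obtain u where "u \<in> U" "Inl y = vmap f1 f2 u" by blast
  then show "\<exists>g. Inl g \<in> U \<and> y = f1 g" by (cases u) auto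
next
  assume "\<exists>g. Inl g \<in> U \<and> y = f1 g" then show "Inl y \<in> vmap f1 f2 ` U"
    by (metis image_eqI vmap_simps(1))
qed

lemma vmap_Inr_img: "Inr B \<in> vmap f1 f2 ` U \<longleftrightarrow> (\<exists>A. Inr A \<in> U \<and> B = f2 A)"
proof
  assume "Inr B \<in> vmap f1 f2 ` U" then obtain u where "u \<in> U" "Inr B = vmap f1 f2 u" by blast
  then show "\<exists>A. Inr A \<in> U \<and> B = f2 A" by (cases u) auto
next
  assume "\<exists>A. Inr A \<in> U \<and> B = f2 A" then show "Inr B \<in> vmap f1 f2 ` U"
    by (metis image_eqI vmap_simps(2))
qed

lemma unicone_subset: "unicone G Ps S a U \<Longrightarrow> V \<subseteq> U \<Longrightarrow> V \<noteq> {} \<Longrightarrow> unicone G Ps S a V"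
  unfolding unicone_def by (meson finite_subset subset_iff)

lemma lip_dist: assumes "lipschitz_map_of_pairs G Ps S H Qs T L C M f1 f2"
   "x \<in> carrier G" "y \<in> carrier G" "real (wdist G S x y) \<le> D"
 shows "real (wdist H T (f1 x) (f1 y)) \<le> L * D + C"
proof -
  have "L \<ge> 1" "real (wdist H T (f1 x) (f1 y)) \<le> L * real (wdist G S x y) + C"
    using assms unfolding lipschitz_map_of_pairs_def lipschitz_map_def by auto
  moreover have "L * real (wdist G S x y) \<le> L * D" using assms(4) \<open>L \<ge> 1\<close> by (intro mult_left_mono) auto
  ultimately show ?thesis by linarith
qed

lemma lip_carrier: "lipschitz_map_of_pairs G Ps S H Qs T L C M f1 f2 \<Longrightarrow> x \<in> carrier G \<Longrightarrow> f1 x \<in> carrier H"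
  unfolding lipschitz_map_of_pairs_def lipschitz_map_def by auto

lemma lip_cones: "lipschitz_map_of_pairs G Ps S H Qs T L C M f1 f2 \<Longrightarrow> A \<in> cones G Ps \<Longrightarrow> f2 A \<in> cones H Qs"
  unfolding lipschitz_map_of_pairs_def by auto

lemma lip_haus: assumes "lipschitz_map_of_pairs G Ps S H Qs T L C M f1 f2" "A \<in> cones G Ps" "a \<in> snd A"
  shows "\<exists>y\<in>snd (f2 A). real (wdist H T (f1 a) y) < M"
  using assms unfolding lipschitz_map_of_pairs_def by (intro haus_pick) auto

lemma lip_consts: "lipschitz_map_of_pairs G Ps S H Qs T L C M f1 f2 \<Longrightarrow> L \<ge> 1 \<and> C \<ge> 0 \<and> M \<ge> 0"
  unfolding lipschitz_map_of_pairs_def by auto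

lemma unicone_Inl: "unicone G Ps S a U \<Longrightarrow> Inl g \<in> U \<Longrightarrow> g \<in> carrier G"
  unfolding unicone_def vertices_def by auto

lemma unicone_Inr: "unicone G Ps S a U \<Longrightarrow> Inr A \<in> U \<Longrightarrow> A \<in> cones G Ps"
  unfolding unicone_def vertices_def by auto

lemma cone_step:
  assumes GP: "group_pair G Ps" and HQ: "group_pair H Qs" and T: "fin_gen_set H T"
    and f: "lipschitz_map_of_pairs G Ps S H Qs T L C M f1 f2"
    and A: "A \<in> cones G Ps" and g: "g \<in> carrier G" and a0: "a0 \<in> snd A"
    and d: "real (wdist G S g a0) \<le> D"
  shows "\<exists>y\<in>snd (f2 A). real (wdist H T (f1 g) y) < L * D + C + M"
proof -
  have grpH: "group H" using HQ unfolding group_pair_def by auto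
  have a0c: "a0 \<in> carrier G" using cone_carrier[OF GP A] a0 by auto
  obtain y where y: "y \<in> snd (f2 A)" "real (wdist H T (f1 a0) y) < M" using lip_haus[OF f A a0] by blast
  have yc: "y \<in> carrier H" using cone_carrier[OF HQ lip_cones[OF f A]] y by auto
  have "wdist H T (f1 g) y \<le> wdist H T (f1 g) (f1 a0) + wdist H T (f1 a0) y"
    using group.wdist_triangle[OF grpH T] lip_carrier[OF f] g a0c yc by blast
  moreover have "real (wdist H T (f1 g) (f1 a0)) \<le> L * D + C" using lip_dist[OF f g a0c d] .
  ultimately show ?thesis using y by (intro bexI[of _ y]) linarith+
qed

lemma part_i:
  assumes GP: "group_pair G Ps" and HQ: "group_pair H Qs" and T: "fin_gen_set H T"
    and f: "lipschitz_map_of_pairs G Ps S H Qs T L C M f1 f2"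
    and a: "real a' \<ge> L * real a + C + M" and U: "unicone G Ps S a U"
  shows "unicone H Qs T a' (vmap f1 f2 ` U)"
proof -
  have cs: "L \<ge> 1" "C \<ge> 0" "M \<ge> 0" using lip_consts[OF f] by auto
  have "vmap f1 f2 ` U \<subseteq> vertices H Qs"
  proof
    fix v assume "v \<in> vmap f1 f2 ` U"
    then obtain u where u: "u \<in> U" "v = vmap f1 f2 u" by blast
    show "v \<in> vertices H Qs"
    proof (cases u)
      case (Inl g) then show ?thesis using u unicone_Inl[OF U] lip_carrier[OF f]
        by (auto simp: vmap_def vertices_def)
    next
      case (Inr A) then show ?thesis using u unicone_Inr[OF U] lip_cones[OF f]
        by (auto simp: vmap_def vertices_def)
    qed
  qed
  moreover have "wdist H T y y' \<le> a'" if yy: "Inl y \<in> vmap f1 f2 ` U" "Inl y' \<in> vmap f1 f2 ` U" for y y'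
  proof -
    obtain g g' where gg: "Inl g \<in> U" "Inl g' \<in> U" "y = f1 g" "y' = f1 g'"
      using yy unfolding vmap_Inl_img by blast
    have "real (wdist G S g g') \<le> real a" using U gg unfolding unicone_def by auto
    from lip_dist[OF f unicone_Inl[OF U gg(1)] unicone_Inl[OF U gg(2)] this]
    have "real (wdist H T y y') \<le> real a'" using gg a cs by simp
    then show ?thesis by simp
  qed
  moreover have "B = B'" if "Inr B \<in> vmap f1 f2 ` U" "Inr B' \<in> vmap f1 f2 ` U" for B B'
    using that U unfolding unicone_def vmap_Inr_img by blast
  moreover have "\<exists>b\<in>snd B. wdist H T y b \<le> a'" if yy: "Inr B \<in> vmap f1 f2 ` U" "Inl y \<in> vmap f1 f2 ` U" for B y
  proof -
    obtain g A where gA: "Inl g \<in> U" "Inr A \<in> U" "y = f1 g" "B = f2 A"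
      using yy unfolding vmap_Inl_img vmap_Inr_img by blast
    obtain a0 where a0: "a0 \<in> snd A" "wdist G S g a0 \<le> a" using U gA unfolding unicone_def by blast
    obtain b where "b \<in> snd (f2 A)" "real (wdist H T (f1 g) b) < L * real a + C + M"
      using cone_step[OF GP HQ T f unicone_Inr[OF U gA(2)] unicone_Inl[OF U gA(1)] a0(1), of "real a"] a0 by auto
    then show ?thesis using gA a by (intro bexI[of _ b]) auto
  qed
  ultimately show ?thesis using U unfolding unicone_def by auto
qed



lemma contig:
  assumes GP: "group_pair G Ps" and HQ: "group_pair H Qs"
    and S: "fin_gen_set G S" and T: "fin_gen_set H T"
    and q: "quasi_retraction_of_pairs G Ps S H Qs T L C M f1 f2 r1 r2"
    and a: "real a' \<ge> L * real a + C + M" and b': "b' \<ge> a'"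
    and b: "real b \<ge> L * real b' + 2 * C + M" and U: "unicone G Ps S a U"
  shows "unicone G Ps S b ((vmap r1 r2 \<circ> vmap f1 f2) ` U \<union> U)"
proof -
  have f: "lipschitz_map_of_pairs G Ps S H Qs T L C M f1 f2"
    and r: "lipschitz_map_of_pairs H Qs T G Ps S L C M r1 r2"
    and ret1: "\<And>g. g \<in> carrier G \<Longrightarrow> real (wdist G S (r1 (f1 g)) g) \<le> C"
    and ret2: "\<And>A. A \<in> cones G Ps \<Longrightarrow> r2 (f2 A) = A"
    using q unfolding quasi_retraction_of_pairs_def by auto
  have grpG: "group G" using GP unfolding group_pair_def by auto
  have cs: "L \<ge> 1" "C \<ge> 0" "M \<ge> 0" using lip_consts[OF f] by auto
  have "L * real a \<ge> 1 * real a" using cs by (intro mult_right_mono) auto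
  moreover have "L * real b' \<ge> 1 * real b'" using cs by (intro mult_right_mono) auto
  moreover have "real b' \<ge> real a'" using b' by simp
  ultimately have ab: "real a + C \<le> real b" and ab0: "a \<le> b" using a b cs by linarith+
  define W where "W = (vmap r1 r2 \<circ> vmap f1 f2) ` U \<union> U"
  have elems: "v \<in> U \<or> (\<exists>h. Inl h \<in> U \<and> v = Inl (r1 (f1 h)))" if vW: "v \<in> W" for v
  proof (cases "v \<in> U")
    case False
    then obtain u where u: "u \<in> U" "v = vmap r1 r2 (vmap f1 f2 u)" using vW unfolding W_def by auto
    show ?thesis
    proof (cases u)
      case (Inl h) then show ?thesis using u by auto
    next
      case (Inr A) then show ?thesis using u ret2 unicone_Inr[OF U] by auto
    qed
  qed simp
  have WInl: "Inl x \<in> U \<or> (\<exists>h. Inl h \<in> U \<and> x = r1 (f1 h))" if "Inl x \<in> W" for x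
    using elems[OF that] by auto
  have WInr: "Inr A \<in> U" if "Inr A \<in> W" for A
    using elems[OF that] by auto
  have UW: "U \<subseteq> W" unfolding W_def by auto
  have Uc: "\<And>g. Inl g \<in> U \<Longrightarrow> g \<in> carrier G" using unicone_Inl[OF U] .
  have rfc: "\<And>g. Inl g \<in> U \<Longrightarrow> r1 (f1 g) \<in> carrier G" using lip_carrier[OF r] lip_carrier[OF f] Uc by blast
  have dU: "real (wdist G S g h) \<le> real a" if "Inl g \<in> U" "Inl h \<in> U" for g h
    using U that unfolding unicone_def by auto
  have sym: "\<And>x y. x \<in> carrier G \<Longrightarrow> y \<in> carrier G \<Longrightarrow> wdist G S x y = wdist G S y x"
    using group.wdist_sym[OF grpG S] by blast
  have tri: "\<And>x y z. x \<in> carrier G \<Longrightarrow> y \<in> carrier G \<Longrightarrow> z \<in> carrier G \<Longrightarrow>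
      real (wdist G S x z) \<le> real (wdist G S x y) + real (wdist G S y z)"
    using group.wdist_triangle[OF grpG S] by (metis of_nat_add of_nat_le_iff)
  have dist: "wdist G S x y \<le> b" if xyW: "Inl x \<in> W" "Inl y \<in> W" for x y
  proof -
    have "real (wdist G S x y) \<le> real b"
    proof (cases "Inl x \<in> U")
      case xU: True
      show ?thesis
      proof (cases "Inl y \<in> U")
        case True then show ?thesis using dU[OF xU True] ab cs by linarith
      next
        case False
        then obtain h where h: "Inl h \<in> U" "y = r1 (f1 h)" using WInl[OF xyW(2)] by auto
        have "real (wdist G S x y) \<le> real (wdist G S x h) + real (wdist G S h y)"
          using tri Uc rfc xU h by blast
        moreover have "real (wdist G S h y) \<le> C" using ret1[OF Uc[OF h(1)]] sym[OF rfc[OF h(1)] Uc[OF h(1)]] h by simp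
        ultimately show ?thesis using dU[OF xU h(1)] ab by linarith
      qed
    next
      case False
      then obtain g where g: "Inl g \<in> U" "x = r1 (f1 g)" using WInl[OF xyW(1)] by auto
      show ?thesis
      proof (cases "Inl y \<in> U")
        case yU: True
        have "real (wdist G S x y) \<le> real (wdist G S x g) + real (wdist G S g y)"
          using tri Uc rfc yU g by blast
        moreover have "real (wdist G S x g) \<le> C" using ret1[OF Uc[OF g(1)]] g by simp
        ultimately show ?thesis using dU[OF g(1) yU] ab by linarith
      next
        case False
        then obtain h where h: "Inl h \<in> U" "y = r1 (f1 h)" using WInl[OF xyW(2)] by auto
        have "real (wdist H T (f1 g) (f1 h)) \<le> L * real a + C"
          using lip_dist[OF f Uc[OF g(1)] Uc[OF h(1)] dU[OF g(1) h(1)]] .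
        then have "real (wdist H T (f1 g) (f1 h)) \<le> real b'" using a b' cs by simp
        from lip_dist[OF r lip_carrier[OF f Uc[OF g(1)]] lip_carrier[OF f Uc[OF h(1)]] this]
        show ?thesis using g h b cs by simp
      qed
    qed
    then show ?thesis by simp
  qed
  have one: "A = B" if "Inr A \<in> W" "Inr B \<in> W" for A B
    using WInr[OF that(1)] WInr[OF that(2)] U unfolding unicone_def by blast
  have cone: "\<exists>z\<in>snd A. wdist G S x z \<le> b" if AxW: "Inr A \<in> W" "Inl x \<in> W" for A x
  proof -
    have AU: "Inr A \<in> U" using WInr[OF AxW(1)] .
    have Ac: "A \<in> cones G Ps" using unicone_Inr[OF U AU] .
    show ?thesis
    proof (cases "Inl x \<in> U")
      case True
      then obtain z where "z \<in> snd A" "wdist G S x z \<le> a" using U AU unfolding unicone_def by blast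
      then show ?thesis using ab0 by (intro bexI[of _ z]) auto
    next
      case False
      then obtain h where h: "Inl h \<in> U" "x = r1 (f1 h)" using WInl[OF AxW(2)] by auto
      obtain a0 where a0: "a0 \<in> snd A" "wdist G S h a0 \<le> a" using U AU h unfolding unicone_def by blast
      obtain y where y: "y \<in> snd (f2 A)" "real (wdist H T (f1 h) y) < L * real a + C + M"
        using cone_step[OF GP HQ T f Ac Uc[OF h(1)] a0(1), of "real a"] a0 by auto
      have "real (wdist H T (f1 h) y) \<le> real b'" using y a b' by simp
      from cone_step[OF HQ GP S r lip_cones[OF f Ac] lip_carrier[OF f Uc[OF h(1)]] y(1) this]
      obtain z where "z \<in> snd (r2 (f2 A))" "real (wdist G S (r1 (f1 h)) z) < L * real b' + C + M" by blast
      then show ?thesis using ret2[OF Ac] h b cs by (intro bexI[of _ z]) auto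
    qed
  qed
  have "W \<subseteq> vertices G Ps"
  proof
    fix v assume "v \<in> W"
    then show "v \<in> vertices G Ps" using elems[of v] U rfc unfolding unicone_def vertices_def by blast
  qed
  moreover have "finite W" "W \<noteq> {}" using U unfolding W_def unicone_def by auto
  ultimately have "unicone G Ps S b W" unfolding unicone_def using dist one cone by blast
  then show ?thesis unfolding W_def .
qed

lemma part_iia:
  assumes GP: "group_pair G Ps" and HQ: "group_pair H Qs"
    and S: "fin_gen_set G S" and T: "fin_gen_set H T"
    and q: "quasi_retraction_of_pairs G Ps S H Qs T L C M f1 f2 r1 r2"
    and a: "real a' \<ge> L * real a + C + M" and b': "b' \<ge> a'"
    and b: "real b \<ge> L * real b' + 2 * C + M"
  shows "simp_homotopic (Rhat G Ps S a) (Rhat G Ps S b) (vmap r1 r2 \<circ> vmap f1 f2) id"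
proof -
  let ?F = "vmap r1 r2 \<circ> vmap f1 f2"
  have c: "?F ` U \<union> U \<in> Rhat G Ps S b" if "U \<in> Rhat G Ps S a" for U
    using contig[OF GP HQ S T q a b' b] that unfolding Rhat_def by auto
  have ne: "U \<noteq> {}" if "U \<in> Rhat G Ps S a" for U using that unfolding Rhat_def unicone_def by auto
  have s1: "simplicial_map (Rhat G Ps S a) (Rhat G Ps S b) ?F"
    unfolding simplicial_map_def
  proof
    fix U assume U: "U \<in> Rhat G Ps S a"
    show "?F ` U \<in> Rhat G Ps S b" using c[OF U] ne[OF U] unicone_subset[of G Ps S b "?F ` U \<union> U" "?F ` U"]
      unfolding Rhat_def by auto
  qed
  have s2: "simplicial_map (Rhat G Ps S a) (Rhat G Ps S b) id"
    unfolding simplicial_map_def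
  proof
    fix U assume U: "U \<in> Rhat G Ps S a"
    show "id ` U \<in> Rhat G Ps S b" using c[OF U] ne[OF U] unicone_subset[of G Ps S b "?F ` U \<union> U" "U"]
      unfolding Rhat_def by auto
  qed
  have "contiguous (Rhat G Ps S a) (Rhat G Ps S b) ?F id"
    unfolding contiguous_def using c by simp
  then show ?thesis unfolding simp_homotopic_def using s1 s2 by (auto intro: r_into_rtranclp)
qed



definition bd1 :: "'v list \<Rightarrow> 'v list \<Rightarrow>\<^sub>0 int" where
  "bd1 \<sigma> = (\<Sum>j<length \<sigma>. frag_cmul ((-1)^j) (frag_of (face j \<sigma>)))"

definition bdF :: "('v list \<Rightarrow>\<^sub>0 int) \<Rightarrow> 'v list \<Rightarrow>\<^sub>0 int" where
  "bdF = frag_extend bd1"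

definition push :: "('v \<Rightarrow> 'w) \<Rightarrow> ('v list \<Rightarrow>\<^sub>0 int) \<Rightarrow> 'w list \<Rightarrow>\<^sub>0 int" where
  "push F = frag_extend (\<lambda>\<sigma>. frag_of (map F \<sigma>))"

definition cone :: "'v \<Rightarrow> ('v list \<Rightarrow>\<^sub>0 int) \<Rightarrow> 'v list \<Rightarrow>\<^sub>0 int" where
  "cone v = frag_extend (\<lambda>\<tau>. frag_of (v # \<tau>))"

fun prism1 :: "('v \<Rightarrow> 'v) \<Rightarrow> 'v list \<Rightarrow> 'v list \<Rightarrow>\<^sub>0 int" where
  "prism1 F [] = 0"
| "prism1 F (v # s) = frag_of (F v # v # s) - cone (F v) (prism1 F s)"

definition prism :: "('v \<Rightarrow> 'v) \<Rightarrow> ('v list \<Rightarrow>\<^sub>0 int) \<Rightarrow> 'v list \<Rightarrow>\<^sub>0 int" where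
  "prism F = frag_extend (prism1 F)"

lemma frag_extend_frag_extend:
  "frag_extend a (frag_extend b x) = frag_extend (\<lambda>\<sigma>. frag_extend a (b \<sigma>)) x"
  using subset_UNIV by (induction x rule: frag_induction) (auto simp: frag_extend_diff)

lemma bdF_simps [simp]:
  "bdF 0 = 0" "bdF (a - b) = bdF a - bdF b" "bdF (a + b) = bdF a + bdF b" "bdF (frag_of \<sigma>) = bd1 \<sigma>"
  by (simp_all add: bdF_def frag_extend_diff frag_extend_add)

lemma push_simps [simp]:
  "push F 0 = 0" "push F (a - b) = push F a - push F b" "push F (frag_of \<sigma>) = frag_of (map F \<sigma>)"
  by (simp_all add: push_def frag_extend_diff)

lemma cone_simps [simp]:
  "cone v 0 = 0" "cone v (a - b) = cone v a - cone v b" "cone v (a + b) = cone v a + cone v b"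
  "cone v (frag_of \<tau>) = frag_of (v # \<tau>)"
  by (simp_all add: cone_def frag_extend_diff frag_extend_add)

lemma prism_simps [simp]:
  "prism F 0 = 0" "prism F (a - b) = prism F a - prism F b" "prism F (frag_of \<sigma>) = prism1 F \<sigma>"
  by (simp_all add: prism_def frag_extend_diff)

lemma face_Cons0 [simp]: "face 0 (v # t) = t" by (simp add: face_def)
lemma face_Cons_Suc [simp]: "face (Suc j) (v # t) = v # face j t" by (simp add: face_def)
lemma face_map: "face j (map F s) = map F (face j s)" by (simp add: face_def take_map drop_map)

lemma bd1_Nil [simp]: "bd1 [] = 0" by (simp add: bd1_def)

lemma bd1_Cons: "bd1 (v # t) = frag_of t - cone v (bd1 t)"
proof -
  have "bd1 (v # t) = frag_of t + (\<Sum>j<length t. frag_cmul ((-1)^(Suc j)) (frag_of (v # face j t)))"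
    unfolding bd1_def length_Cons sum.lessThan_Suc_shift by (simp del: power_Suc)
  also have "(\<Sum>j<length t. frag_cmul ((-1)^(Suc j)) (frag_of (v # face j t)))
      = - (\<Sum>j<length t. frag_cmul ((-1)^j) (frag_of (v # face j t)))"
    by (simp add: sum_negf[symmetric])
  also have "(\<Sum>j<length t. frag_cmul ((-1)^j) (frag_of (v # face j t))) = cone v (bd1 t)"
    unfolding bd1_def cone_def by (simp add: frag_extend_sum frag_extend_cmul comp_def)
  finally show ?thesis by simp
qed

lemma bdF_cone: "bdF (cone v y) = y - cone v (bdF y)"
  using subset_UNIV
proof (induction y rule: frag_induction)
  case (one x) then show ?case by (simp add: bd1_Cons)
next
  case (diff a b) then show ?case by (simp add: algebra_simps)
qed simp

lemma prism_cone: "prism F (cone v y) = cone (F v) (cone v y) - cone (F v) (prism F y)"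
  using subset_UNIV
proof (induction y rule: frag_induction)
  case (diff a b) then show ?case by (simp add: algebra_simps)
qed simp_all

lemma prism_basic: "bdF (prism1 F \<sigma>) + prism F (bd1 \<sigma>) = frag_of \<sigma> - frag_of (map F \<sigma>)"
proof (induction \<sigma>)
  case Nil then show ?case by simp
next
  case (Cons v s)
  have e1: "bdF (prism1 F (v # s)) = (frag_of (v # s) - (frag_of (F v # s) - cone (F v) (cone v (bd1 s))))
      - (prism1 F s - cone (F v) (bdF (prism1 F s)))"
    by (simp add: bd1_Cons bdF_cone)
  have e2: "prism F (bd1 (v # s)) = prism1 F s - (cone (F v) (cone v (bd1 s)) - cone (F v) (prism F (bd1 s)))"
    by (simp add: bd1_Cons prism_cone)
  have "bdF (prism1 F (v # s)) + prism F (bd1 (v # s))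
     = frag_of (v # s) - frag_of (F v # s) + cone (F v) (bdF (prism1 F s) + prism F (bd1 s))"
    unfolding e1 e2 by (simp add: algebra_simps)
  also have "\<dots> = frag_of (v # s) - frag_of (map F (v # s))" using Cons by simp
  finally show ?case .
qed

lemma prism_homotopy: "bdF (prism F x) + prism F (bdF x) = x - push F x"
  using subset_UNIV
proof (induction x rule: frag_induction)
  case (one x) then show ?case using prism_basic by simp
next
  case (diff a b) then show ?case by (simp add: algebra_simps)
qed simp

lemma bd1_map: "bd1 (map F \<sigma>) = push F (bd1 \<sigma>)"
  unfolding bd1_def push_def by (simp add: frag_extend_sum frag_extend_cmul comp_def face_map)

lemma push_bdF: "bdF (push F x) = push F (bdF x)"
  using subset_UNIV
proof (induction x rule: frag_induction)
  case (one x)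
  show ?case by (simp add: bd1_map)
qed simp_all

lemma push_push: "push r (push f x) = push (r \<circ> f) x"
  unfolding push_def by (simp add: frag_extend_frag_extend)

lemma keys_push: "Poly_Mapping.keys (push F x) \<subseteq> map F ` Poly_Mapping.keys x"
  unfolding push_def using keys_frag_extend by fastforce

lemma keys_cone: "Poly_Mapping.keys (cone v x) \<subseteq> (Cons v) ` Poly_Mapping.keys x"
  unfolding cone_def using keys_frag_extend by fastforce

lemma keys_bd1: "Poly_Mapping.keys (bd1 \<sigma>) \<subseteq> {face j \<sigma> |j. j < length \<sigma>}"
proof -
  have "Poly_Mapping.keys (bd1 \<sigma>) \<subseteq> (\<Union>j\<in>{..<length \<sigma>}. Poly_Mapping.keys (frag_cmul ((-1)^j) (frag_of (face j \<sigma>))))"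
    unfolding bd1_def by (rule keys_sum)
  also have "\<dots> \<subseteq> {face j \<sigma> |j. j < length \<sigma>}" by auto
  finally show ?thesis .
qed

lemma length_face: "j < length \<sigma> \<Longrightarrow> length (face j \<sigma>) = length \<sigma> - 1"
  by (simp add: face_def)

lemma keys_prism1: "Poly_Mapping.keys (prism1 F \<sigma>) \<subseteq> {w. length w = Suc (length \<sigma>) \<and> set w \<subseteq> set \<sigma> \<union> F ` set \<sigma>}"
proof (induction \<sigma>)
  case (Cons v s)
  have "Poly_Mapping.keys (prism1 F (v # s)) \<subseteq> Poly_Mapping.keys (frag_of (F v # v # s)) \<union> Poly_Mapping.keys (cone (F v) (prism1 F s))"
    using keys_diff[of "frag_of (F v # v # s)" "cone (F v) (prism1 F s)"] by simp
  also have "\<dots> \<subseteq> {F v # v # s} \<union> (Cons (F v)) ` Poly_Mapping.keys (prism1 F s)"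
    using keys_cone by (metis Un_mono keys_frag_of subset_refl)
  also have "\<dots> \<subseteq> {w. length w = Suc (length (v # s)) \<and> set w \<subseteq> set (v # s) \<union> F ` set (v # s)}"
  proof
    fix w assume "w \<in> {F v # v # s} \<union> (Cons (F v)) ` Poly_Mapping.keys (prism1 F s)"
    then show "w \<in> {w. length w = Suc (length (v # s)) \<and> set w \<subseteq> set (v # s) \<union> F ` set (v # s)}"
    proof
      assume "w \<in> (Cons (F v)) ` Poly_Mapping.keys (prism1 F s)"
      then obtain u where "u \<in> Poly_Mapping.keys (prism1 F s)" "w = F v # u" by blast
      then show ?thesis using Cons by auto
    qed auto
  qed
  finally show ?case .
qed simp

lemma keys_prism: "Poly_Mapping.keys (prism F x) \<subseteq> (\<Union>\<sigma>\<in>Poly_Mapping.keys x. Poly_Mapping.keys (prism1 F \<sigma>))"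
  unfolding prism_def by (rule keys_frag_extend)

lemma keys_bdF: "Poly_Mapping.keys (bdF x) \<subseteq> (\<Union>\<sigma>\<in>Poly_Mapping.keys x. Poly_Mapping.keys (bd1 \<sigma>))"
  unfolding bdF_def by (rule keys_frag_extend)

lemma lookup_bd1: "Poly_Mapping.lookup (bd1 \<sigma>) \<tau> = (\<Sum>j<length \<sigma>. if face j \<sigma> = \<tau> then (-1)^j else 0)"
  unfolding bd1_def by (simp add: lookup_sum) (intro sum.cong, auto)

lemma bdry_lookup: "bdry (Poly_Mapping.lookup x) = Poly_Mapping.lookup (bdF x)"
proof
  fix \<tau>
  have k: "{\<sigma>. Poly_Mapping.lookup x \<sigma> \<noteq> 0} = Poly_Mapping.keys x" by (auto simp: in_keys_iff)
  show "bdry (Poly_Mapping.lookup x) \<tau> = Poly_Mapping.lookup (bdF x) \<tau>"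
    unfolding bdry_def bdF_def frag_extend_def k
    by (simp add: lookup_sum lookup_bd1 sum_distrib_left if_distrib mult.commute cong: if_cong)
qed

lemma is_chain_lookup: "(\<And>\<sigma>. \<sigma> \<in> Poly_Mapping.keys x \<Longrightarrow> length \<sigma> = Suc i \<and> set \<sigma> \<in> K) \<Longrightarrow>
   is_chain K i (Poly_Mapping.lookup x)"
  unfolding is_chain_def by (auto simp: in_keys_iff)



lemma part_iib:
  assumes GP: "group_pair G Ps" and HQ: "group_pair H Qs"
    and S: "fin_gen_set G S" and T: "fin_gen_set H T"
    and f: "lipschitz_map_of_pairs G Ps S H Qs T L C M f1 f2"
    and q: "quasi_retraction_of_pairs G Ps S H Qs T L C M f1 f2 r1 r2"
    and ess: "ess_trivial_homology (Rhat H Qs T) i"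
  shows "ess_trivial_homology (Rhat G Ps S) i"
  unfolding ess_trivial_homology_def
proof
  fix \<alpha>
  have r: "lipschitz_map_of_pairs H Qs T G Ps S L C M r1 r2"
    using q unfolding quasi_retraction_of_pairs_def by auto
  have cs: "L \<ge> 1" "C \<ge> 0" "M \<ge> 0" using lip_consts[OF f] by auto
  define \<alpha>' where "\<alpha>' = nat \<lceil>L * real \<alpha> + C + M\<rceil>"
  have a: "real \<alpha>' \<ge> L * real \<alpha> + C + M" unfolding \<alpha>'_def by (rule real_nat_ceiling_ge)
  obtain \<beta>'' where b'': "\<beta>'' \<ge> \<alpha>'"
    and hb: "\<And>c. is_cycle (Rhat H Qs T \<alpha>') i c \<Longrightarrow> is_boundary (Rhat H Qs T \<beta>'') i c"
    using ess unfolding ess_trivial_homology_def by blast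
  define \<beta> where "\<beta> = nat \<lceil>L * real \<beta>'' + 2 * C + M\<rceil>"
  have b: "real \<beta> \<ge> L * real \<beta>'' + 2 * C + M" unfolding \<beta>_def by (rule real_nat_ceiling_ge)
  have br: "real \<beta> \<ge> L * real \<beta>'' + C + M" using b cs by linarith
  have "L * real \<alpha> \<ge> 1 * real \<alpha>" using cs by (intro mult_right_mono) auto
  moreover have "L * real \<beta>'' \<ge> 1 * real \<beta>''" using cs by (intro mult_right_mono) auto
  moreover have "real \<beta>'' \<ge> real \<alpha>'" using b'' by simp
  ultimately have "real \<alpha> \<le> real \<beta>" using a b cs by linarith
  then have ab: "\<alpha> \<le> \<beta>" by simp
  show "\<exists>\<beta>\<ge>\<alpha>. \<forall>c. is_cycle (Rhat G Ps S \<alpha>) i c \<longrightarrow> is_boundary (Rhat G Ps S \<beta>) i c"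
  proof (intro exI[of _ \<beta>] conjI allI impI)
    show "\<alpha> \<le> \<beta>" by (rule ab)
    fix c assume cyc: "is_cycle (Rhat G Ps S \<alpha>) i c"
    have fin: "finite {\<sigma>. c \<sigma> \<noteq> 0}" and supp: "\<And>\<sigma>. c \<sigma> \<noteq> 0 \<Longrightarrow> length \<sigma> = Suc i \<and> set \<sigma> \<in> Rhat G Ps S \<alpha>"
      using cyc unfolding is_cycle_def is_chain_def by auto
    define x where "x = Abs_poly_mapping c"
    have lx: "Poly_Mapping.lookup x = c" unfolding x_def using fin by simp
    have kx: "length \<sigma> = Suc i \<and> set \<sigma> \<in> Rhat G Ps S \<alpha>" if "\<sigma> \<in> Poly_Mapping.keys x" for \<sigma>
      using supp that lx by (auto simp: in_keys_iff)
    define y where "y = push (vmap f1 f2) x"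
    have ychain: "is_chain (Rhat H Qs T \<alpha>') i (Poly_Mapping.lookup y)"
    proof (rule is_chain_lookup)
      fix \<sigma> assume "\<sigma> \<in> Poly_Mapping.keys y"
      then obtain \<tau> where \<tau>: "\<tau> \<in> Poly_Mapping.keys x" "\<sigma> = map (vmap f1 f2) \<tau>"
        using keys_push unfolding y_def by blast
      have "unicone G Ps S \<alpha> (set \<tau>)" using kx[OF \<tau>(1)] unfolding Rhat_def by simp
      from part_i[OF GP HQ T f a this]
      have "unicone H Qs T \<alpha>' (vmap f1 f2 ` set \<tau>)" .
      then show "length \<sigma> = Suc i \<and> set \<sigma> \<in> Rhat H Qs T \<alpha>'"
        using \<tau> kx[OF \<tau>(1)] unfolding Rhat_def by auto
    qed
    have bx: "bdF x = 0" if "i \<noteq> 0"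
    proof -
      have "bdry c = (\<lambda>_. 0)" using cyc that unfolding is_cycle_def by auto
      then have "Poly_Mapping.lookup (bdF x) = (\<lambda>_. 0)" using bdry_lookup[of x] lx by simp
      then show ?thesis by (intro poly_mapping_eqI) simp
    qed
    have ycyc: "is_cycle (Rhat H Qs T \<alpha>') i (Poly_Mapping.lookup y)"
    proof (cases "i = 0")
      case False
      have "bdry (Poly_Mapping.lookup y) = Poly_Mapping.lookup (push (vmap f1 f2) (bdF x))"
        unfolding bdry_lookup y_def push_bdF ..
      also have "\<dots> = (\<lambda>_. 0)" using bx[OF False] by (simp add: fun_eq_iff)
      finally show ?thesis using ychain unfolding is_cycle_def by simp
    qed (use ychain in \<open>simp add: is_cycle_def\<close>)
    obtain d where d: "is_chain (Rhat H Qs T \<beta>'') (Suc i) d" "bdry d = Poly_Mapping.lookup y"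
      using hb[OF ycyc] unfolding is_boundary_def by blast
    define z where "z = Abs_poly_mapping d"
    have lz: "Poly_Mapping.lookup z = d" unfolding z_def using d(1) unfolding is_chain_def by simp
    have kz: "length \<sigma> = Suc (Suc i) \<and> set \<sigma> \<in> Rhat H Qs T \<beta>''" if "\<sigma> \<in> Poly_Mapping.keys z" for \<sigma>
      using d(1) that lz unfolding is_chain_def by (auto simp: in_keys_iff)
    have bz: "bdF z = y"
      by (rule poly_mapping_eqI) (metis bdry_lookup d(2) lz)
    define F where "F = vmap r1 r2 \<circ> vmap f1 f2"
    have p0: "prism F (bdF x) = 0"
    proof (cases "i = 0")
      case True
      have "\<tau> = []" if tk: "\<tau> \<in> Poly_Mapping.keys (bdF x)" for \<tau>
      proof -
        obtain \<sigma> where \<sigma>: "\<sigma> \<in> Poly_Mapping.keys x" "\<tau> \<in> Poly_Mapping.keys (bd1 \<sigma>)"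
          using keys_bdF tk by blast
        then obtain j where "j < length \<sigma>" "\<tau> = face j \<sigma>" using keys_bd1 by blast
        then have "length \<tau> = 0" using kx[OF \<sigma>(1)] True length_face[of j \<sigma>] by simp
        then show ?thesis by simp
      qed
      note nil = this
      show ?thesis unfolding prism_def
      proof (rule frag_extend_eq_0)
        fix \<tau> assume "\<tau> \<in> Poly_Mapping.keys (bdF x)"
        then have "\<tau> = []" by (rule nil)
        then show "prism1 F \<tau> = 0" by simp
      qed
    qed (simp add: bx)
    have pF: "push F x = bdF (push (vmap r1 r2) z)"
      unfolding F_def push_push[symmetric] push_bdF bz y_def ..
    define e where "e = prism F x + push (vmap r1 r2) z"
    have "bdF (prism F x) = x - push F x" using prism_homotopy[of F x] p0 by simp
    then have be: "bdF e = x" using pF unfolding e_def by simp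
    have echain: "is_chain (Rhat G Ps S \<beta>) (Suc i) (Poly_Mapping.lookup e)"
    proof (rule is_chain_lookup)
      fix w assume wk: "w \<in> Poly_Mapping.keys e"
      have "w \<in> Poly_Mapping.keys (prism F x) \<or> w \<in> Poly_Mapping.keys (push (vmap r1 r2) z)"
        using wk keys_add[of "prism F x" "push (vmap r1 r2) z"] unfolding e_def by blast
      then show "length w = Suc (Suc i) \<and> set w \<in> Rhat G Ps S \<beta>"
      proof
        assume "w \<in> Poly_Mapping.keys (prism F x)"
        then obtain \<sigma> where \<sigma>: "\<sigma> \<in> Poly_Mapping.keys x" "w \<in> Poly_Mapping.keys (prism1 F \<sigma>)"
          using keys_prism[of F x] by blast
        have "w \<in> {w. length w = Suc (length \<sigma>) \<and> set w \<subseteq> set \<sigma> \<union> F ` set \<sigma>}"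
          using keys_prism1[of F \<sigma>] \<sigma>(2) by blast
        then have w: "length w = Suc (Suc i)" "set w \<subseteq> F ` set \<sigma> \<union> set \<sigma>"
          using kx[OF \<sigma>(1)] by auto
        have "unicone G Ps S \<alpha> (set \<sigma>)" using kx[OF \<sigma>(1)] unfolding Rhat_def by simp
        from contig[OF GP HQ S T q a b'' b this]
        have u: "unicone G Ps S \<beta> (F ` set \<sigma> \<union> set \<sigma>)" unfolding F_def .
        have ne: "set w \<noteq> {}" using w(1) by (cases w) auto
        have "unicone G Ps S \<beta> (set w)" by (rule unicone_subset[OF u w(2) ne])
        then show ?thesis using w(1) unfolding Rhat_def by simp
      next
        assume "w \<in> Poly_Mapping.keys (push (vmap r1 r2) z)"
        then obtain \<tau> where \<tau>: "\<tau> \<in> Poly_Mapping.keys z" "w = map (vmap r1 r2) \<tau>"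
          using keys_push[of "vmap r1 r2" z] by blast
        have "unicone H Qs T \<beta>'' (set \<tau>)" using kz[OF \<tau>(1)] unfolding Rhat_def by simp
        from part_i[OF HQ GP S r br this]
        have "unicone G Ps S \<beta> (vmap r1 r2 ` set \<tau>)" .
        then show ?thesis using \<tau> kz[OF \<tau>(1)] unfolding Rhat_def by simp
      qed
    qed
    have "bdry (Poly_Mapping.lookup e) = c" using bdry_lookup[of e] be lx by simp
    then show "is_boundary (Rhat G Ps S \<beta>) i c" unfolding is_boundary_def using echain by blast
  qed
qed

theorem lemma4p2:
  fixes G :: "('g, 'b) monoid_scheme" and H :: "('h, 'c) monoid_scheme"
    and Ps :: "'g set list" and Qs :: "'h set list"
    and S :: "'g set" and T :: "'h set"
    and L C M :: real
    and f1 :: "'g \<Rightarrow> 'h" and f2 :: "nat \<times> 'g set \<Rightarrow> nat \<times> 'h set"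
  assumes GP: "group_pair G Ps" and HQ: "group_pair H Qs"
    and S: "fin_gen_set G S" and T: "fin_gen_set H T"
    and f: "lipschitz_map_of_pairs G Ps S H Qs T L C M f1 f2"
  shows
    "(\<forall>\<alpha> \<alpha>' :: nat. real \<alpha>' \<ge> L * real \<alpha> + C + M \<longrightarrow>
        simplicial_map (Rhat G Ps S \<alpha>) (Rhat H Qs T \<alpha>') (vmap f1 f2))
   \<and> (\<forall>(r1 :: 'h \<Rightarrow> 'g) (r2 :: nat \<times> 'h set \<Rightarrow> nat \<times> 'g set).
        lipschitz_map_of_pairs H Qs T G Ps S L C M r1 r2 \<longrightarrow>
        quasi_retraction_of_pairs G Ps S H Qs T L C M f1 f2 r1 r2 \<longrightarrow>
          (\<forall>\<alpha> \<alpha>' \<beta> \<beta>' :: nat.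
             real \<alpha>' \<ge> L * real \<alpha> + C + M \<longrightarrow> \<beta>' \<ge> \<alpha>' \<longrightarrow>
             real \<beta> \<ge> L * real \<beta>' + 2 * C + M \<longrightarrow>
             simp_homotopic (Rhat G Ps S \<alpha>) (Rhat G Ps S \<beta>)
               (vmap r1 r2 \<circ> vmap f1 f2) id)
        \<and> (\<forall>i. ess_trivial_homology (Rhat H Qs T) i \<longrightarrow>
                ess_trivial_homology (Rhat G Ps S) i))"
proof (intro conjI allI impI)
  fix \<alpha> \<alpha>' :: nat assume a: "real \<alpha>' \<ge> L * real \<alpha> + C + M"
  show "simplicial_map (Rhat G Ps S \<alpha>) (Rhat H Qs T \<alpha>') (vmap f1 f2)"
    unfolding simplicial_map_def Rhat_def using part_i[OF GP HQ T f a] by blast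
next
  fix r1 r2 \<alpha> \<alpha>' \<beta> \<beta>'
  assume q: "quasi_retraction_of_pairs G Ps S H Qs T L C M f1 f2 r1 r2"
    and a: "real \<alpha>' \<ge> L * real \<alpha> + C + M" and b': "\<beta>' \<ge> \<alpha>'"
    and b: "real \<beta> \<ge> L * real \<beta>' + 2 * C + M"
  show "simp_homotopic (Rhat G Ps S \<alpha>) (Rhat G Ps S \<beta>) (vmap r1 r2 \<circ> vmap f1 f2) id"
    using part_iia[OF GP HQ S T q a b' b] .
next
  fix r1 r2 i
  assume q: "quasi_retraction_of_pairs G Ps S H Qs T L C M f1 f2 r1 r2"
    and e: "ess_trivial_homology (Rhat H Qs T) i"
  show "ess_trivial_homology (Rhat G Ps S) i" using part_iib[OF GP HQ S T f q e] .
qed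

end
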